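(* Consider the infinite-horizon dynamic multi-agent system described in the context, and suppose Assumption B holds and $(\mathbf A_i,\mathbf B_i)$ is controllable for every $i\in\mathcal V$. Let $\mathcal X_0\subseteq\mathbb R^{nd}$ be the set of feasible initial conditions. Then there exists a set $\mathbb X_0\subseteq\mathcal X_0$ such that (i) $\mathbb X_0$ has nonempty interior and contains the origin in its interior; and (ii) for every $\mathbf x(0)\in\mathbb X_0$, every optimal solution $(\mathbf U^\ast,\mathbf E^\ast)$ of the infinite-horizon social welfare maximization problem for $\mathbf x(0)$, together with the zero price sequence $\lambda^\ast_t=0$ for all $t\ge0$, forms an infinite-horizon competitive equilibrium.
   Context: Infinite-horizon dynamic multi-agent system: $n$ agents $\mathcal V=\{1,\dots,n\}$, time set $\mathcal T=\{0,1,2,\dots\}$. Agent $i$ has state $\mathbf x_i(t)\in\mathbb R^d$, input $\mathbf u_i(t)\in\mathbb R^m$, dynamics $\mathbf x_i(t+1)=\mathbf A_i\mathbf x_i(t)+\mathbf B_i\mathbf u_i(t)$, utility $f_i:\mathbb R^d\times\mathbb R^m\to\mathbb R$, resource consumption $h_i:\mathbb R^m\to\mathbb R$, excess resource $a_i(t)\in\mathbb R$, traded resource $e_i(t)\in\mathbb R$; $C(t)=\sum_ia_i(t)$; $\mathbf x(t)=(\mathbf x_1(t),\dots,\mathbf x_n(t))\in\mathbb R^{nd}$ with given $\mathbf x(0)$; $\mathbf U_i,\mathbf E_i$ denote the sequences $(\mathbf u_i(t))_{t\ge0}$, $(e_i(t))_{t\ge0}$, and $\mathbf U,\mathbf E$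 their collections over all agents. Assumption B: (i) each $f_i$ is concave and negative definite, i.e. $f_i(\mathbf 0,\mathbf 0)=0$ and $f_i(\mathbf x,\mathbf u)<0$ for $(\mathbf x,\mathbf u)\ne(\mathbf 0,\mathbf 0)$; (ii) each $h_i$ is non-negative and convex; (iii) $h_i(\mathbf 0)=0$; (iv) there is $C>0$ with $C(t)\ge C$ for all $t\ge0$. (Under (i) all series $\sum_t f_i$ converge in $[-\infty,0]$.) An infinite-horizon competitive equilibrium for $\mathbf x(0)$ is a triple $(\boldsymbol\lambda^\ast,\mathbf U^\ast,\mathbf E^\ast)$, $\boldsymbol\lambda^\ast=(\lambda^\ast_t)_{t\ge0}$, such that (i) for each $i$, $(\mathbf U_i^\ast,\mathbf E_i^\ast)$ attains a finite maximum of $\sum_{t=0}^\infty[f_i(\mathbf x_i(t),\mathbf u_i(t))+\lambda^\ast_te_i(t)]$ subject to the dynamics and $e_i(t)\le a_i(t)-h_i(\mathbf u_i(t))$ for all $t$; (ii) $\sum_{i=1}^ne_i^\ast(t)=0$ for all $t$. The infinite-horizon social welfare maximization problem for $\mathbf x(0)$: maximize $\sum_{i=1}^n\sum_{t=0}^\infty f_i(\mathbf x_i(t),\mathbf u_i(t))$ over $(\mathbf U,\mathbf E)$ subject to the dynamics, $e_i(t)\le a_i(t)-h_i(\mathbf u_i(t))$ and $\sum_{i=1}^ne_i(t)=0$ for all $t\ge0$. The set of feasible initial conditions $\mathcal X_0$ consists of those $\mathbf x(0)$ for which this problem has an admissible $(\mathbf U,\mathbf E)$ and finite optimal value. *)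

theory Defs
  imports "HOL-Analysis.Analysis"
begin

text \<open>Controllability of the pair (A,B) (Kalman rank condition): the column space of
  the controllability matrix [B, AB, ..., A^(d-1) B] is all of R^d, i.e. it has rank d.\<close>
definition controllable :: "real^'d^'d \<Rightarrow> real^'m^'d \<Rightarrow> bool" where
  "controllable A B \<longleftrightarrow>
     span (\<Union>k\<in>{..<CARD('d)}. range (\<lambda>u. (((\<lambda>x. A *v x) ^^ k) (B *v u)))) = UNIV"

fun traj :: "real^'d^'d \<Rightarrow> real^'m^'d \<Rightarrow> real^'d \<Rightarrow> (nat \<Rightarrow> real^'m) \<Rightarrow> nat \<Rightarrow> real^'d" where
  "traj A B x0 U 0 = x0"
| "traj A B x0 U (Suc t) = A *v traj A B x0 U t + B *v U t"

text \<open>Value of an infinite series of reals, as an extended real: the limsup of the partial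
  sums (equal to the ordinary sum in [-inf,0] for nonpositive terms, and to the sum
  whenever the series converges).\<close>
definition series_val :: "(nat \<Rightarrow> real) \<Rightarrow> ereal" where
  "series_val g = limsup (\<lambda>N. ereal (\<Sum>t<N. g t))"

definition agent_payoff ::
  "real^'d^'d \<Rightarrow> real^'m^'d \<Rightarrow> (real^'d \<Rightarrow> real^'m \<Rightarrow> real) \<Rightarrow> real^'d \<Rightarrow> (nat \<Rightarrow> real)
   \<Rightarrow> (nat \<Rightarrow> real^'m) \<Rightarrow> (nat \<Rightarrow> real) \<Rightarrow> ereal" where
  "agent_payoff A B f x0 lam U e =
     series_val (\<lambda>t. f (traj A B x0 U t) (U t) + lam t * e t)"

definition agent_feasible :: "(real^'m \<Rightarrow> real) \<Rightarrow> (nat \<Rightarrow> real) \<Rightarrow> (nat \<Rightarrow> real^'m) \<Rightarrow> (nat \<Rightarrow> real) \<Rightarrow> bool" where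
  "agent_feasible h a U e \<longleftrightarrow> (\<forall>t. e t \<le> a t - h (U t))"

definition competitive_eq ::
  "('n::finite \<Rightarrow> real^'d^'d) \<Rightarrow> ('n \<Rightarrow> real^'m^'d) \<Rightarrow> ('n \<Rightarrow> real^'d \<Rightarrow> real^'m \<Rightarrow> real)
   \<Rightarrow> ('n \<Rightarrow> real^'m \<Rightarrow> real) \<Rightarrow> ('n \<Rightarrow> nat \<Rightarrow> real) \<Rightarrow> real^'d^'n
   \<Rightarrow> (nat \<Rightarrow> real) \<Rightarrow> ('n \<Rightarrow> nat \<Rightarrow> real^'m) \<Rightarrow> ('n \<Rightarrow> nat \<Rightarrow> real) \<Rightarrow> bool" where
  "competitive_eq A B f h a x0 lam U E \<longleftrightarrow>
     (\<forall>i. agent_feasible (h i) (a i) (U i) (E i)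
          \<and> agent_payoff (A i) (B i) (f i) (x0 $ i) lam (U i) (E i) \<noteq> \<infinity>
          \<and> agent_payoff (A i) (B i) (f i) (x0 $ i) lam (U i) (E i) \<noteq> -\<infinity>
          \<and> (\<forall>U' e'. agent_feasible (h i) (a i) U' e' \<longrightarrow>
               agent_payoff (A i) (B i) (f i) (x0 $ i) lam U' e'
                 \<le> agent_payoff (A i) (B i) (f i) (x0 $ i) lam (U i) (E i)))
     \<and> (\<forall>t. (\<Sum>i\<in>UNIV. E i t) = 0)"

definition welfare ::
  "('n::finite \<Rightarrow> real^'d^'d) \<Rightarrow> ('n \<Rightarrow> real^'m^'d) \<Rightarrow> ('n \<Rightarrow> real^'d \<Rightarrow> real^'m \<Rightarrow> real)
   \<Rightarrow> real^'d^'n \<Rightarrow> ('n \<Rightarrow> nat \<Rightarrow> real^'m) \<Rightarrow> ereal" where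
  "welfare A B f x0 U = (\<Sum>i\<in>UNIV. series_val (\<lambda>t. f i (traj (A i) (B i) (x0 $ i) (U i) t) (U i t)))"

text \<open>Admissibility for the social welfare problem (dynamics are built into traj).\<close>
definition swm_admissible ::
  "('n::finite \<Rightarrow> real^'m \<Rightarrow> real) \<Rightarrow> ('n \<Rightarrow> nat \<Rightarrow> real) \<Rightarrow> ('n \<Rightarrow> nat \<Rightarrow> real^'m)
   \<Rightarrow> ('n \<Rightarrow> nat \<Rightarrow> real) \<Rightarrow> bool" where
  "swm_admissible h a U E \<longleftrightarrow>
     (\<forall>i t. E i t \<le> a i t - h i (U i t)) \<and> (\<forall>t. (\<Sum>i\<in>UNIV. E i t) = 0)"

definition swm_value ::
  "('n::finite \<Rightarrow> real^'d^'d) \<Rightarrow> ('n \<Rightarrow> real^'m^'d) \<Rightarrow> ('n \<Rightarrow> real^'d \<Rightarrow> real^'m \<Rightarrow> real)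
   \<Rightarrow> ('n \<Rightarrow> real^'m \<Rightarrow> real) \<Rightarrow> ('n \<Rightarrow> nat \<Rightarrow> real) \<Rightarrow> real^'d^'n \<Rightarrow> ereal" where
  "swm_value A B f h a x0 =
     Sup {welfare A B f x0 U | U E. swm_admissible h a U E}"

definition swm_optimal ::
  "('n::finite \<Rightarrow> real^'d^'d) \<Rightarrow> ('n \<Rightarrow> real^'m^'d) \<Rightarrow> ('n \<Rightarrow> real^'d \<Rightarrow> real^'m \<Rightarrow> real)
   \<Rightarrow> ('n \<Rightarrow> real^'m \<Rightarrow> real) \<Rightarrow> ('n \<Rightarrow> nat \<Rightarrow> real) \<Rightarrow> real^'d^'n
   \<Rightarrow> ('n \<Rightarrow> nat \<Rightarrow> real^'m) \<Rightarrow> ('n \<Rightarrow> nat \<Rightarrow> real) \<Rightarrow> bool" where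
  "swm_optimal A B f h a x0 U E \<longleftrightarrow>
     swm_admissible h a U E \<and>
     (\<forall>U' E'. swm_admissible h a U' E' \<longrightarrow> welfare A B f x0 U' \<le> welfare A B f x0 U)"

definition feasible_inits ::
  "('n::finite \<Rightarrow> real^'d^'d) \<Rightarrow> ('n \<Rightarrow> real^'m^'d) \<Rightarrow> ('n \<Rightarrow> real^'d \<Rightarrow> real^'m \<Rightarrow> real)
   \<Rightarrow> ('n \<Rightarrow> real^'m \<Rightarrow> real) \<Rightarrow> ('n \<Rightarrow> nat \<Rightarrow> real) \<Rightarrow> (real^'d^'n) set" where
  "feasible_inits A B f h a =
     {x0. (\<exists>U E. swm_admissible h a U E)
          \<and> swm_value A B f h a x0 \<noteq> \<infinity> \<and> swm_value A B f h a x0 \<noteq> -\<infinity>}"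

end

theory Submission
  imports Defs
begin


definition pw :: "real^'d^'d \<Rightarrow> nat \<Rightarrow> real^'d \<Rightarrow> real^'d" where
  "pw A k = ((\<lambda>x. A *v x) ^^ k)"

lemma pw_0[simp]: "pw A 0 x = x" by (simp add: pw_def)
lemma pw_Suc: "pw A (Suc k) x = A *v pw A k x" by (simp add: pw_def)
lemma pw_Suc': "pw A (Suc k) x = pw A k (A *v x)" by (simp add: pw_def funpow_Suc_right del: funpow.simps)

lemma pw_linear: "linear (pw A k)"
  by (induction k) (auto simp: pw_def intro: linear_compose[unfolded o_def] matrix_vector_mul_linear linear_id[unfolded id_def])

lemma pw_add: "pw A k (x + y) = pw A k x + pw A k y" using linear_add[OF pw_linear] .
lemma pw_scale: "pw A k (c *\<^sub>R x) = c *\<^sub>R pw A k x" using linear_scale[OF pw_linear] .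
lemma pw_zero[simp]: "pw A k 0 = 0" using linear_0[OF pw_linear] .

lemma mv_scale: "(M::real^'a^'b) *v (c *\<^sub>R x) = c *\<^sub>R (M *v x)" using linear_scale[OF matrix_vector_mul_linear] .
lemma mv_sum: "(M::real^'a^'b) *v (\<Sum>i\<in>I. g i) = (\<Sum>i\<in>I. M *v g i)" using linear_sum[OF matrix_vector_mul_linear] .

lemma traj_closed: "traj A B y W T = pw A T y + (\<Sum>t<T. pw A (T - 1 - t) (B *v W t))"
proof (induction T)
  case 0 then show ?case by simp
next
  case (Suc T)
  have "traj A B y W (Suc T) = A *v (pw A T y + (\<Sum>t<T. pw A (T - 1 - t) (B *v W t))) + B *v W T"
    using Suc by simp
  also have "\<dots> = pw A (Suc T) y + (\<Sum>t<T. pw A (Suc (T - 1 - t)) (B *v W t)) + B *v W T"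
    by (simp add: matrix_vector_right_distrib pw_Suc linear_sum[OF matrix_vector_mul_linear])
  also have "(\<Sum>t<T. pw A (Suc (T - 1 - t)) (B *v W t)) = (\<Sum>t<T. pw A (Suc T - 1 - t) (B *v W t))"
    by (intro sum.cong) (auto simp: Suc_diff_Suc)
  finally show ?case by (simp add: add.assoc)
qed

lemma span_repr:
  assumes "z \<in> span (\<Union>k\<in>{..<n}. range (\<lambda>u. (((\<lambda>x. A *v x) ^^ k) (B *v u))))"
  shows "\<exists>v. z = (\<Sum>k<n. pw A k (B *v v k))"
  using assms
proof (induction rule: span_induct_alt)
  case base
  show ?case by (rule exI[of _ "\<lambda>_. 0"]) simp
next
  case (step c x y)
  from step(1) obtain k u where k: "k < n" "x = pw A k (B *v u)" by (auto simp: pw_def)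
  from step(2) obtain v where v: "y = (\<Sum>k<n. pw A k (B *v v k))" by blast
  let ?w = "\<lambda>j. (if j = k then c *\<^sub>R u else 0) + v j"
  have t: "pw A j (B *v ?w j) = (if j = k then c *\<^sub>R pw A k (B *v u) else 0) + pw A j (B *v v j)" for j
  proof (cases "j = k")
    case True
    then show ?thesis using True by (simp only: if_True refl matrix_vector_right_distrib mv_scale pw_add pw_scale)
  next
    case False
    then show ?thesis using False by (simp only: if_False add_0 refl matrix_vector_right_distrib matrix_vector_mult_0_right pw_zero)
  qed
  have "(\<Sum>j<n. pw A j (B *v ?w j)) = (\<Sum>j<n. (if j = k then c *\<^sub>R pw A k (B *v u) else 0)) + y"
    unfolding t sum.distrib v by simp
  also have "\<dots> = c *\<^sub>R x + y" using k by simp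
  finally have "c *\<^sub>R x + y = (\<Sum>j<n. pw A j (B *v ?w j))" by simp
  then show ?case by (intro exI[of _ ?w])
qed



lemma traj_zero_after:
  assumes "traj A B y W T = 0" "\<forall>t\<ge>T. W t = 0"
  shows "\<forall>t\<ge>T. traj A B y W t = 0"
proof -
  have ts: "traj A B y W (T + s) = 0" for s
    by (induction s) (use assms in auto)
  show ?thesis
  proof (intro allI impI)
    fix t assume "T \<le> t"
    then have "t = T + (t - T)" by simp
    then show "traj A B y W t = 0" using ts[of "t - T"] by simp
  qed
qed

lemma steer:
  assumes c: "controllable A B"
  shows "\<exists>T W. (\<forall>t\<ge>T. W t = 0) \<and> (\<forall>t\<ge>T. traj A B (y::real^'d) W t = 0)"
proof -
  let ?d = "CARD('d)"
  have "- pw A ?d y \<in> span (\<Union>k\<in>{..<?d}. range (\<lambda>u. (((\<lambda>x. A *v x) ^^ k) (B *v u))))"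
    using c unfolding controllable_def by (metis UNIV_I)
  from span_repr[OF this] obtain v where v: "- pw A ?d y = (\<Sum>k<?d. pw A k (B *v v k))" by blast
  define W where "W t = (if t < ?d then v (?d - Suc t) else 0)" for t
  have "traj A B y W ?d = pw A ?d y + (\<Sum>t<?d. pw A (?d - Suc t) (B *v v (?d - Suc t)))"
    unfolding traj_closed W_def by (intro arg_cong2[where f="(+)"] sum.cong) auto
  also have "(\<Sum>t<?d. pw A (?d - Suc t) (B *v v (?d - Suc t))) = (\<Sum>k<?d. pw A k (B *v v k))"
    by (rule sum.nat_diff_reindex)
  finally have "traj A B y W ?d = 0" unfolding v[symmetric] by simp
  moreover have "\<forall>t\<ge>?d. W t = 0" by (simp add: W_def)
  ultimately show ?thesis using traj_zero_after by blast
qed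

lemma traj_superpos:
  fixes Ws :: "'b::finite \<Rightarrow> nat \<Rightarrow> real^'m" and ys :: "'b \<Rightarrow> real^'d"
  shows "traj A B (\<Sum>b\<in>UNIV. c b *\<^sub>R ys b) (\<lambda>t. \<Sum>b\<in>UNIV. c b *\<^sub>R Ws b t) t
       = (\<Sum>b\<in>UNIV. c b *\<^sub>R traj A B (ys b) (Ws b) t)"
proof (induction t)
  case 0 then show ?case by simp
next
  case (Suc t)
  then show ?case
    by (simp add: mv_sum mv_scale sum.distrib scaleR_add_right)
qed

lemma series_val_eventually_zero:
  assumes "\<forall>t\<ge>T. g t = 0"
  shows "series_val g = ereal (\<Sum>t<T. g t)"
proof -
  have "eventually (\<lambda>N. ereal (\<Sum>t<N. g t) = ereal (\<Sum>t<T. g t)) sequentially"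
  proof (rule eventually_sequentiallyI[of T])
    fix N assume "T \<le> N"
    then have "(\<Sum>t<N. g t) = (\<Sum>t<T. g t) + (\<Sum>t\<in>{T..<N}. g t)"
      unfolding atLeast0LessThan[symmetric] using sum.atLeastLessThan_concat[of 0 T N g] by simp
    also have "(\<Sum>t\<in>{T..<N}. g t) = 0" using assms by simp
    finally show "ereal (\<Sum>t<N. g t) = ereal (\<Sum>t<T. g t)" by simp
  qed
  then have "((\<lambda>N. ereal (\<Sum>t<N. g t)) \<longlongrightarrow> ereal (\<Sum>t<T. g t)) sequentially"
    by (rule tendsto_eventually)
  then show ?thesis unfolding series_val_def by (intro lim_imp_Limsup) simp_all
qed

lemma series_val_le_term:
  assumes "\<And>t. g t \<le> 0"
  shows "series_val g \<le> ereal (g s)"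
proof -
  have "eventually (\<lambda>N. ereal (\<Sum>t<N. g t) \<le> ereal (g s)) sequentially"
  proof (rule eventually_sequentiallyI[of "Suc s"])
    fix N assume "Suc s \<le> N"
    then have "(\<Sum>t<N. g t) = g s + (\<Sum>t\<in>{..<N} - {s}. g t)"
      by (subst sum.remove[of _ s]) auto
    also have "\<dots> \<le> g s" using assms by (simp add: sum_nonpos)
    finally show "ereal (\<Sum>t<N. g t) \<le> ereal (g s)" by simp
  qed
  then show ?thesis unfolding series_val_def by (rule Limsup_bounded)
qed

lemma series_val_nonpos:
  assumes "\<And>t. g t \<le> 0"
  shows "series_val g \<le> 0"
proof -
  have "series_val g \<le> ereal (g 0)" by (rule series_val_le_term[OF assms])
  also have "ereal (g 0) \<le> 0" using assms[of 0] by simp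
  finally show ?thesis .
qed



lemma concave_cont:
  fixes F :: "'a::euclidean_space \<Rightarrow> real"
  assumes "concave_on UNIV F"
  shows "continuous_on UNIV F"
proof -
  have "continuous_on UNIV (\<lambda>x. - F x)"
    using assms unfolding concave_on_def by (intro convex_on_continuous) auto
  from continuous_on_minus[OF this] show ?thesis by simp
qed

lemma cont_at0:
  fixes F :: "'a::euclidean_space \<Rightarrow> real"
  assumes "continuous_on UNIV F" "e > 0"
  shows "\<exists>d>0. \<forall>z. norm z < d \<longrightarrow> \<bar>F z - F 0\<bar> < e"
proof -
  from assms have "\<exists>d>0. \<forall>x'\<in>UNIV. dist x' 0 < d \<longrightarrow> dist (F x') (F 0) < e"
    unfolding continuous_on_iff by blast
  then show ?thesis by (simp add: dist_norm)
qed

lemma small_level: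
  fixes F :: "'a::euclidean_space \<Rightarrow> real"
  assumes conc: "concave_on UNIV F" and F0: "F 0 = 0" and neg: "\<And>z. z \<noteq> 0 \<Longrightarrow> F z < 0"
    and rho: "\<rho> > 0"
  shows "\<exists>M>0. \<forall>z. F z \<ge> -M \<longrightarrow> norm z < \<rho>"
proof -
  have cont: "continuous_on UNIV F" by (rule concave_cont[OF conc])
  obtain w :: 'a where w: "norm w = \<rho>" using vector_choose_size[of \<rho>] rho by auto
  then have ne: "sphere (0::'a) \<rho> \<noteq> {}" by auto
  obtain z0 where z0: "z0 \<in> sphere 0 \<rho>" "\<And>y. y \<in> sphere 0 \<rho> \<Longrightarrow> F y \<le> F z0"
    using continuous_attains_sup[OF compact_sphere ne continuous_on_subset[OF cont]] by blast
  have "z0 \<noteq> 0" using z0(1) rho by auto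
  then have M0: "F z0 < 0" by (rule neg)
  define M where "M = - F z0 / 2"
  have "M > 0" using M0 by (simp add: M_def)
  moreover have "norm z < \<rho>" if Fz: "F z \<ge> -M" for z
  proof (rule ccontr)
    assume "\<not> norm z < \<rho>"
    then have nz: "norm z \<ge> \<rho>" by simp
    define s where "s = \<rho> / norm z"
    have npos: "norm z > 0" using nz rho by linarith
    have s0: "s > 0" "s \<le> 1" using nz rho npos by (auto simp: s_def)
    have "F ((1 - s) *\<^sub>R 0 + s *\<^sub>R z) \<ge> (1 - s) * F 0 + s * F z"
      using concave_onD[OF conc, of s 0 z] s0 by simp
    then have c1: "F (s *\<^sub>R z) \<ge> s * F z" using F0 by simp
    have "norm (s *\<^sub>R z) = \<rho>" using s0 npos rho by (simp add: s_def)
    then have "F (s *\<^sub>R z) \<le> F z0" using z0(2) by simp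
    then have "s * F z \<le> F z0" using c1 by simp
    moreover have "s * F z \<ge> s * (- M)" using Fz s0 by (intro mult_left_mono) auto
    ultimately have "s * (- F z0 / 2) \<ge> - F z0" by (simp add: M_def)
    moreover have "s * (- F z0 / 2) \<le> 1 * (- F z0 / 2)" using s0 M0 by (intro mult_right_mono) auto
    ultimately show False using M0 by simp
  qed
  ultimately show ?thesis by blast
qed

lemma convex_small:
  fixes h :: "'a::euclidean_space \<Rightarrow> real"
  assumes "convex_on UNIV h" "h 0 = 0" "e > 0"
  shows "\<exists>\<rho>>0. \<forall>u. norm u < \<rho> \<longrightarrow> h u < e"
proof -
  have "continuous_on UNIV h" using assms(1) by (intro convex_on_continuous) auto
  from cont_at0[OF this assms(3)] show ?thesis using assms(2) by force
qed



lemma steer_small: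
  fixes A :: "real^'d^'d" and B :: "real^'m^'d" and F :: "(real^'d) \<times> (real^'m) \<Rightarrow> real"
  assumes c: "controllable A B" and cont: "continuous_on UNIV F" and F0: "F 0 = 0" and eta: "\<eta> > 0"
  shows "\<exists>r>0. \<forall>y. norm y < r \<longrightarrow> (\<exists>W T. (\<forall>t\<ge>T. W t = 0 \<and> traj A B y W t = 0)
            \<and> (\<Sum>t<T. F (traj A B y W t, W t)) \<ge> -\<eta>)"
proof -
  have "\<forall>b::'d. \<exists>p. (\<forall>t\<ge>fst p. snd p t = 0) \<and> (\<forall>t\<ge>fst p. traj A B (axis b 1) (snd p) t = 0)"
    using steer[OF c] by simp
  from choice[OF this] obtain P where P: "\<And>b. (\<forall>t\<ge>fst (P b). snd (P b) t = 0) \<and> (\<forall>t\<ge>fst (P b). traj A B (axis b 1) (snd (P b)) t = 0)"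
    by blast
  define Wf where "Wf b = snd (P b)" for b
  define T where "T = Max (range (\<lambda>b. fst (P b)))"
  have TP: "fst (P b) \<le> T" for b unfolding T_def by (rule Max_ge) auto
  have Wz: "Wf b t = 0" "traj A B (axis b 1) (Wf b) t = 0" if "t \<ge> T" for b t
    using P[of b] TP[of b] that unfolding Wf_def by auto
  define p where "p b t = (traj A B (axis b 1) (Wf b) t, Wf b t)" for b t
  define K where "K = (\<Sum>t<T. \<Sum>b\<in>UNIV. norm (p b t)) + 1"
  have "0 \<le> (\<Sum>t<T. \<Sum>b\<in>UNIV. norm (p b t))" by (intro sum_nonneg) auto
  then have K0: "K > 0" unfolding K_def by linarith
  have Kt: "(\<Sum>b\<in>UNIV. norm (p b t)) \<le> K" if "t < T" for t
  proof -
    have "(\<Sum>b\<in>UNIV. norm (p b t)) \<le> (\<Sum>t<T. \<Sum>b\<in>UNIV. norm (p b t))"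
      using that by (intro member_le_sum) (auto intro: sum_nonneg)
    then show ?thesis unfolding K_def by simp
  qed
  define \<epsilon> where "\<epsilon> = \<eta> / (real T + 1)"
  have e0: "\<epsilon> > 0" using eta by (simp add: \<epsilon>_def)
  obtain d where d: "d > 0" "\<And>z. norm z < d \<Longrightarrow> \<bar>F z - F 0\<bar> < \<epsilon>"
    using cont_at0[OF cont e0] by blast
  define r where "r = d / K"
  have r0: "r > 0" using d K0 by (simp add: r_def)
  have "\<exists>W T. (\<forall>t\<ge>T. W t = 0 \<and> traj A B y W t = 0) \<and> (\<Sum>t<T. F (traj A B y W t, W t)) \<ge> -\<eta>"
    if ny: "norm y < r" for y
  proof -
    define W where "W t = (\<Sum>b\<in>UNIV. (y$b) *\<^sub>R Wf b t)" for t
    have ye: "y = (\<Sum>b\<in>UNIV. (y$b) *\<^sub>R axis b 1)"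
      using basis_expansion[of y] by (simp add: scalar_mult_eq_scaleR)
    have tr: "traj A B y W t = (\<Sum>b\<in>UNIV. (y$b) *\<^sub>R traj A B (axis b 1) (Wf b) t)" for t
      using traj_superpos[of A B "\<lambda>b. y$b" "\<lambda>b. axis b 1" Wf t] unfolding W_def ye[symmetric] .
    have pair: "(traj A B y W t, W t) = (\<Sum>b\<in>UNIV. (y$b) *\<^sub>R p b t)" for t
      by (simp add: tr W_def p_def prod_eq_iff fst_sum snd_sum)
    have zero: "W t = 0 \<and> traj A B y W t = 0" if "t \<ge> T" for t
      using Wz[OF that] by (simp add: tr W_def)
    have small: "F (traj A B y W t, W t) \<ge> - \<epsilon>" if "t < T" for t
    proof -
      have "norm (traj A B y W t, W t) \<le> (\<Sum>b\<in>UNIV. norm ((y$b) *\<^sub>R p b t))"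
        unfolding pair by (rule norm_sum)
      also have "\<dots> \<le> (\<Sum>b\<in>UNIV. norm y * norm (p b t))"
        by (intro sum_mono) (auto intro: mult_right_mono component_le_norm_cart)
      also have "\<dots> = norm y * (\<Sum>b\<in>UNIV. norm (p b t))" by (simp add: sum_distrib_left)
      also have "\<dots> \<le> norm y * K" using Kt[OF that] by (intro mult_left_mono) auto
      also have "\<dots> < r * K" using ny K0 by simp
      also have "\<dots> = d" using K0 by (simp add: r_def)
      finally have "\<bar>F (traj A B y W t, W t) - F 0\<bar> < \<epsilon>" by (rule d(2))
      then show ?thesis using F0 by simp
    qed
    have "(\<Sum>t<T. F (traj A B y W t, W t)) \<ge> (\<Sum>t<T. - \<epsilon>)"
      using small by (intro sum_mono) auto
    moreover have "(\<Sum>t<T. - \<epsilon>) \<ge> - \<eta>"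
    proof -
      have "real T * \<epsilon> \<le> \<eta>" using eta by (simp add: \<epsilon>_def field_simps)
      then show ?thesis by simp
    qed
    ultimately show ?thesis using zero by (intro exI[of _ W] exI[of _ T]) auto
  qed
  then show ?thesis using r0 by blast
qed



lemma admissible_of:
  fixes h :: "'n::finite \<Rightarrow> real^'m \<Rightarrow> real" and U :: "'n \<Rightarrow> nat \<Rightarrow> real^'m"
  assumes hs: "\<And>i t. h i (U i t) \<le> C / real CARD('n)" and aC: "\<And>t. (\<Sum>i\<in>UNIV. a i t) \<ge> C"
  shows "\<exists>E. swm_admissible h a U E"
proof -
  define N where "N = real CARD('n)"
  have N0: "N > 0" by (simp add: N_def)
  define S where "S t = (\<Sum>i\<in>UNIV. a i t) - (\<Sum>i\<in>UNIV. h i (U i t))" for t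
  have S0: "S t \<ge> 0" for t
  proof -
    have "(\<Sum>i\<in>UNIV. h i (U i t)) \<le> (\<Sum>i\<in>(UNIV::'n set). C / N)"
      using hs by (intro sum_mono) (simp add: N_def)
    also have "\<dots> = C" using N0 by (simp add: N_def)
    finally show ?thesis using aC[of t] by (simp add: S_def)
  qed
  define E where "E i t = a i t - h i (U i t) - S t / N" for i t
  have "E i t \<le> a i t - h i (U i t)" for i t using S0[of t] N0 by (simp add: E_def)
  moreover have "(\<Sum>i\<in>UNIV. E i t) = 0" for t
    using N0 by (simp add: E_def sum_subtractf S_def N_def)
  ultimately show ?thesis unfolding swm_admissible_def by blast
qed



theorem theorem7:
  fixes A :: "'n::finite \<Rightarrow> real^'d^'d"
    and B :: "'n \<Rightarrow> real^'m^'d"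
    and f :: "'n \<Rightarrow> real^'d \<Rightarrow> real^'m \<Rightarrow> real"
    and h :: "'n \<Rightarrow> real^'m \<Rightarrow> real"
    and a :: "'n \<Rightarrow> nat \<Rightarrow> real"
  assumes f_concave: "\<And>i. concave_on UNIV (\<lambda>(x, u). f i x u)"
    and f_zero: "\<And>i. f i 0 0 = 0"
    and f_neg: "\<And>i x u. (x, u) \<noteq> (0, 0) \<Longrightarrow> f i x u < 0"
    and h_nonneg: "\<And>i u. h i u \<ge> 0"
    and h_convex: "\<And>i. convex_on UNIV (h i)"
    and h_zero: "\<And>i. h i 0 = 0"
    and C_lower: "\<exists>C>0. \<forall>t. (\<Sum>i\<in>UNIV. a i t) \<ge> C"
    and ctrb: "\<And>i. controllable (A i) (B i)"
  shows "\<exists>X0 \<subseteq> feasible_inits A B f h a.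
           interior X0 \<noteq> {} \<and> 0 \<in> interior X0 \<and>
           (\<forall>x0\<in>X0. \<forall>U E. swm_optimal A B f h a x0 U E \<longrightarrow>
              competitive_eq A B f h a x0 (\<lambda>t. 0) U E)"
proof -
  obtain C where C0: "C > 0" and aC: "\<And>t. (\<Sum>i\<in>UNIV. a i t) \<ge> C" using C_lower by blast
  define N where "N = real CARD('n)"
  have N0: "N > 0" "N \<ge> 1" by (simp_all add: N_def)
  define F where "F i = (\<lambda>z::(real^'d) \<times> (real^'m). f i (fst z) (snd z))" for i
  have Fc: "concave_on UNIV (F i)" for i
    using f_concave[of i] by (simp add: F_def case_prod_unfold)
  have F0: "F i 0 = 0" for i by (simp add: F_def zero_prod_def f_zero)
  have Fn: "F i z < 0" if "z \<noteq> 0" for i z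
    using that f_neg[of "fst z" "snd z" i] by (simp add: F_def zero_prod_def prod_eq_iff)
  have fle: "f i x u \<le> 0" for i x u
    using f_neg[of x u i] f_zero[of i] by (cases "(x, u) = (0, 0)") auto
  have "\<forall>i. \<exists>M>0. \<forall>x u. f i x u \<ge> -M \<longrightarrow> h i u < C / N"
  proof
    fix i
    obtain \<rho> where rho: "\<rho> > 0" "\<And>u. norm u < \<rho> \<Longrightarrow> h i u < C / N"
      using convex_small[OF h_convex h_zero, of "C / N" i] C0 N0 by auto
    obtain M where M: "M > 0" "\<And>z. F i z \<ge> -M \<Longrightarrow> norm z < \<rho>"
      using small_level[OF Fc F0 Fn rho(1)] by blast
    have "h i u < C / N" if "f i x u \<ge> -M" for x u
    proof -
      have "norm (x, u) < \<rho>" using M(2)[of "(x, u)"] that by (simp add: F_def)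
      then have "norm u < \<rho>" using norm_snd_le[of u x] by linarith
      then show ?thesis by (rule rho(2))
    qed
    then show "\<exists>M>0. \<forall>x u. f i x u \<ge> -M \<longrightarrow> h i u < C / N" using M(1) by blast
  qed
  from choice[OF this] obtain M where M: "\<And>i. M i > 0" "\<And>i x u. f i x u \<ge> -M i \<Longrightarrow> h i u < C / N"
    by blast
  define \<Delta> where "\<Delta> = Min (range M)"
  have D0: "\<Delta> > 0" unfolding \<Delta>_def using M(1) by (subst Min_gr_iff) auto
  have DM: "\<Delta> \<le> M i" for i unfolding \<Delta>_def by (rule Min_le) auto
  have hsmall: "h i u < C / N" if "f i x u \<ge> -\<Delta>" for i x u
    using M(2)[of i x u] DM[of i] that by simp
  define \<eta> where "\<eta> = \<Delta> / N"
  have eta0: "\<eta> > 0" "\<eta> \<le> \<Delta>" "N * \<eta> = \<Delta>" using D0 N0 by (auto simp: \<eta>_def field_simps)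
  have "\<forall>i. \<exists>r>0. \<forall>y. norm y < r \<longrightarrow> (\<exists>W T. (\<forall>t\<ge>T. W t = 0 \<and> traj (A i) (B i) y W t = 0)
            \<and> (\<Sum>t<T. F i (traj (A i) (B i) y W t, W t)) \<ge> -\<eta>)"
    using steer_small[OF ctrb concave_cont[OF Fc] F0 eta0(1)] by blast
  from choice[OF this] obtain R where R: "\<And>i. R i > 0"
    "\<And>i y. norm y < R i \<Longrightarrow> (\<exists>W T. (\<forall>t\<ge>T. W t = 0 \<and> traj (A i) (B i) y W t = 0)
            \<and> (\<Sum>t<T. F i (traj (A i) (B i) y W t, W t)) \<ge> -\<eta>)"
    by blast
  define r where "r = Min (range R)"
  have r0: "r > 0" unfolding r_def using R(1) by (subst Min_gr_iff) auto
  have rR: "r \<le> R i" for i unfolding r_def by (rule Min_le) auto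
  define sv where "sv i x V = series_val (\<lambda>t. f i (traj (A i) (B i) x V t) (V t))" for i x V
  have wf: "welfare A B f x0 U = (\<Sum>i\<in>UNIV. sv i (x0$i) (U i))" for x0 U
    by (simp add: welfare_def sv_def)
  have sv_le: "sv i x V \<le> 0" for i x V
    unfolding sv_def by (rule series_val_nonpos) (rule fle)
  have sv_small: "h i (V t) < C / N" if "sv i x V \<ge> -\<Delta>" for i x V t
  proof -
    have "ereal (-\<Delta>) \<le> ereal (f i (traj (A i) (B i) x V t) (V t))"
      using that series_val_le_term[of "\<lambda>t. f i (traj (A i) (B i) x V t) (V t)" t] fle
      unfolding sv_def by (meson order_trans)
    then show ?thesis using hsmall by simp
  qed
  have adm: "\<exists>E. swm_admissible h a U E" if "\<And>i. sv i (x0$i) (U i) \<ge> -\<Delta>" for U and x0 :: "real^'d^'n"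
    using admissible_of[of h U C a] sv_small[OF that] aC N_def
    by (metis less_imp_le)
  have wf_le: "welfare A B f x0 U \<le> 0" for x0 U
    unfolding wf by (intro sum_nonpos sv_le)
  have main: "x0 \<in> feasible_inits A B f h a \<and> (\<forall>U E. swm_optimal A B f h a x0 U E \<longrightarrow>
              competitive_eq A B f h a x0 (\<lambda>t. 0) U E)" if x0r: "norm x0 < r" for x0
  proof -
    have exW: "\<exists>W. sv i (x0$i) W \<ge> -\<eta>" for i
    proof -
      have "norm (x0$i) < R i" using Finite_Cartesian_Product.norm_nth_le[of x0 i] x0r rR[of i] by simp
      from R(2)[OF this] obtain W T where WT: "\<forall>t\<ge>T. W t = 0 \<and> traj (A i) (B i) (x0$i) W t = 0"
        "(\<Sum>t<T. F i (traj (A i) (B i) (x0$i) W t, W t)) \<ge> -\<eta>" by blast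
      have "sv i (x0$i) W = ereal (\<Sum>t<T. f i (traj (A i) (B i) (x0$i) W t) (W t))"
        unfolding sv_def by (rule series_val_eventually_zero) (use WT(1) f_zero in auto)
      then show ?thesis using WT(2) by (intro exI[of _ W]) (simp add: F_def)
    qed
    have "\<forall>i. \<exists>W. sv i (x0$i) W \<ge> -\<eta>" using exW by blast
    from choice[OF this] obtain D where D: "\<And>i. sv i (x0$i) (D i) \<ge> -\<eta>" by blast
    have DD: "sv i (x0$i) (D i) \<ge> -\<Delta>" for i using D[of i] eta0(2) by (meson ereal_less_eq(3) neg_le_iff_le order_trans)
    obtain ED where ED: "swm_admissible h a D ED" using adm[OF DD] by blast
    have wD: "welfare A B f x0 D \<ge> -\<Delta>"
    proof -
      have "(\<Sum>i\<in>(UNIV::'n set). ereal (-\<eta>)) \<le> welfare A B f x0 D"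
        unfolding wf by (intro sum_mono D)
      moreover have "(\<Sum>i\<in>(UNIV::'n set). ereal (-\<eta>)) = ereal (-\<Delta>)"
        using eta0(3) by (simp add: N_def)
      ultimately show ?thesis by simp
    qed
    have feas: "x0 \<in> feasible_inits A B f h a"
    proof -
      let ?S = "{welfare A B f x0 U | U E. swm_admissible h a U E}"
      have "welfare A B f x0 D \<in> ?S" using ED by blast
      then have "swm_value A B f h a x0 \<ge> welfare A B f x0 D"
        unfolding swm_value_def by (rule Sup_upper)
      then have lo: "swm_value A B f h a x0 \<ge> -\<Delta>" using wD by simp
      have "swm_value A B f h a x0 \<le> 0"
        unfolding swm_value_def by (rule Sup_least) (auto intro: wf_le)
      then show ?thesis using lo ED unfolding feasible_inits_def by auto
    qed
    have opt: "competitive_eq A B f h a x0 (\<lambda>t. 0) U E" if so: "swm_optimal A B f h a x0 U E" for U E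
    proof -
      have admUE: "swm_admissible h a U E" using so by (simp add: swm_optimal_def)
      have wU: "welfare A B f x0 U \<ge> -\<Delta>"
        using so ED wD unfolding swm_optimal_def by (meson order_trans)
      have split: "welfare A B f x0 V = sv i (x0$i) (V i) + (\<Sum>j\<in>UNIV - {i}. sv j (x0$j) (V j))" for V i
        unfolding wf by (rule sum.remove) auto
      have rest_le: "(\<Sum>j\<in>UNIV - {i}. sv j (x0$j) (V j)) \<le> 0" for V i
        by (intro sum_nonpos sv_le)
      have svU: "sv i (x0$i) (U i) \<ge> -\<Delta>" for i
      proof -
        have "welfare A B f x0 U \<le> sv i (x0$i) (U i) + 0"
          unfolding split[of U i] by (intro add_left_mono rest_le)
        then show ?thesis using wU by simp
      qed
      have rest_fin: "\<bar>\<Sum>j\<in>UNIV - {i}. sv j (x0$j) (U j)\<bar> \<noteq> \<infinity>" for i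
      proof -
        have "\<bar>sv j (x0$j) (U j)\<bar> \<noteq> \<infinity>" for j
          using svU[of j] sv_le[of j "x0$j" "U j"] by auto
        then show ?thesis by (simp add: sum_Inf)
      qed
      have pay: "agent_payoff (A i) (B i) (f i) (x0 $ i) (\<lambda>t. 0) V e = sv i (x0$i) V" for i V e
        by (simp add: agent_payoff_def sv_def)
      have best: "sv i (x0$i) V \<le> sv i (x0$i) (U i)" for i V
      proof (rule ccontr)
        assume "\<not> ?thesis"
        then have gt: "sv i (x0$i) V > sv i (x0$i) (U i)" by simp
        define U' where "U' = U(i := V)"
        have "sv j (x0$j) (U' j) \<ge> -\<Delta>" for j
          using svU[of j] gt svU[of i] by (cases "j = i") (auto simp: U'_def)
        from adm[OF this] obtain E' where "swm_admissible h a U' E'" by blast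
        then have "welfare A B f x0 U' \<le> welfare A B f x0 U" using so unfolding swm_optimal_def by blast
        moreover have "(\<Sum>j\<in>UNIV - {i}. sv j (x0$j) (U' j)) = (\<Sum>j\<in>UNIV - {i}. sv j (x0$j) (U j))"
          by (intro sum.cong) (auto simp: U'_def)
        ultimately have "sv i (x0$i) V + (\<Sum>j\<in>UNIV - {i}. sv j (x0$j) (U j))
            \<le> sv i (x0$i) (U i) + (\<Sum>j\<in>UNIV - {i}. sv j (x0$j) (U j))"
          using split[of U' i] split[of U i] by (simp add: U'_def)
        then have "sv i (x0$i) V \<le> sv i (x0$i) (U i)"
          using rest_fin[of i] by (subst (asm) ereal_add_le_add_iff2) auto
        then show False using gt by simp
      qed
      show ?thesis
        unfolding competitive_eq_def
      proof (intro conjI allI impI)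
        fix i
        show "agent_feasible (h i) (a i) (U i) (E i)"
          using admUE by (simp add: swm_admissible_def agent_feasible_def)
        show "agent_payoff (A i) (B i) (f i) (x0 $ i) (\<lambda>t. 0) (U i) (E i) \<noteq> \<infinity>"
          using sv_le[of i "x0$i" "U i"] unfolding pay by auto
        show "agent_payoff (A i) (B i) (f i) (x0 $ i) (\<lambda>t. 0) (U i) (E i) \<noteq> -\<infinity>"
          using svU[of i] unfolding pay by auto
        fix U' e'
        show "agent_payoff (A i) (B i) (f i) (x0 $ i) (\<lambda>t. 0) U' e'
                 \<le> agent_payoff (A i) (B i) (f i) (x0 $ i) (\<lambda>t. 0) (U i) (E i)"
          unfolding pay by (rule best)
      next
        fix t
        show "(\<Sum>i\<in>UNIV. E i t) = 0" using admUE by (simp add: swm_admissible_def)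
      qed
    qed
    show ?thesis using feas opt by blast
  qed
  show ?thesis
  proof (intro exI[of _ "ball 0 r"] conjI)
    show "ball 0 r \<subseteq> feasible_inits A B f h a" using main by (auto simp: dist_norm)
    show "interior (ball 0 r) \<noteq> {}" using r0 by simp
    show "0 \<in> interior (ball 0 r)" using r0 by simp
    show "\<forall>x0\<in>ball 0 r. \<forall>U E. swm_optimal A B f h a x0 U E \<longrightarrow> competitive_eq A B f h a x0 (\<lambda>t. 0) U E"
      using main by (auto simp: dist_norm)
  qed
qed

end
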